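(* Let $N_{\mathsf s}\ge1$ be an integer and $\beta>0$, and for $\gamma>0$ define \[ I(\gamma):=\beta\sum_{k\ge0}\frac{(N_{\mathsf s}^2\beta)^k}{k!}e^{-N_{\mathsf s}^2\beta}\log_2\!\Big(1+\frac{\gamma}{1+\frac{k}{N_{\mathsf s}^2}\gamma}\Big). \] Then its high-SNR slope is \[ \mathcal S_\infty:=\lim_{\gamma\to\infty}\gamma\,\ln 2\,\frac{dI}{d\gamma}(\gamma)=\beta e^{-N_{\mathsf s}^2\beta}. \]
   Context: $I(\gamma)$ is the large-system mutual information (bits/s/Hz) of time-hopping CDMA with $N_{\mathsf s}$ pulses per symbol, Gaussian inputs, and a bank of single-user matched filters followed by independent decoders knowing the spreading matrix. *)

theory Defs
  imports "HOL-Analysis.Analysis"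
begin

definition thcdma_MI :: "nat \<Rightarrow> real \<Rightarrow> real \<Rightarrow> real" where
  "thcdma_MI Ns \<beta> \<gamma> =
     \<beta> * (\<Sum>k. ((real Ns ^ 2 * \<beta>) ^ k / fact k) * exp (- (real Ns ^ 2 * \<beta>))
             * log 2 (1 + \<gamma> / (1 + (real k / real Ns ^ 2) * \<gamma>)))"

end

theory Submission
  imports Defs "HOL-Real_Asymp.Real_Asymp"
begin

lemma deriv_F:
  fixes a x :: real assumes "a \<ge> 0" "x > 0"
  shows "((\<lambda>y. log 2 (1 + y / (1 + a*y))) has_real_derivative
           1/((1+a*x)*(1+(a+1)*x)*ln 2)) (at x)"
proof -
  have p1: "1 + a*x > 0" using assms by (simp add: add_pos_nonneg)
  have p2: "1 + x/(1+a*x) > 0" using assms p1 by (simp add: add_pos_nonneg)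
  have d: "((\<lambda>y. log 2 (1 + y / (1 + a*y))) has_real_derivative
     1/((1+a*x)*(1+a*x)) / (ln 2 * (1 + x/(1+a*x)))) (at x)"
    using p1 p2 assms by (intro derivative_eq_intros refl) auto
  moreover have eq: "1/((1+a*x)*(1+a*x)) / (ln 2 * (1 + x/(1+a*x)))
     = 1/((1+a*x)*(1+(a+1)*x)*ln 2)"
  proof -
    have e: "1 + x/(1+a*x) = (1+(a+1)*x)/(1+a*x)" using p1 by (simp add: field_simps)
    have g: "\<And>(p::real) (q::real) (r::real). p \<noteq> 0 \<Longrightarrow> 1 / (p * p) / (r * (q / p)) = 1 / (p * q * r)"
      by (simp add: field_simps)
    show ?thesis unfolding e using p1 g[of "1+a*x" "1+(a+1)*x" "ln 2"] by simp
  qed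
  ultimately show ?thesis by (simp only:)
qed

lemma D_bound:
  fixes a x :: real assumes "a \<ge> 0" "x > 0"
  shows "0 \<le> 1/((1+a*x)*(1+(a+1)*x)*ln 2)" "1/((1+a*x)*(1+(a+1)*x)*ln 2) \<le> 1 / ln 2"
proof -
  have h: "(1+a*x)*(1+(a+1)*x) \<ge> 1" using assms
    by (simp add: mult_ge1_I)
  show "0 \<le> 1/((1+a*x)*(1+(a+1)*x)*ln 2)" using h by simp
  have "1/((1+a*x)*(1+(a+1)*x)*ln 2) = (1/((1+a*x)*(1+(a+1)*x))) / ln 2" by simp
  also have "\<dots> \<le> 1 / ln 2" using h by (intro divide_right_mono) auto
  finally show "1/((1+a*x)*(1+(a+1)*x)*ln 2) \<le> 1 / ln 2" .
qed

lemma tail_bound: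
  fixes a x N :: real assumes "N > 0" "a \<ge> 1/N" "x > 0"
  shows "x/((1+a*x)*(1+(a+1)*x)) \<le> N / x"
proof -
  have a0: "a > 0" using assms by (smt (verit) divide_pos_pos)
  have "(1+a*x)*(1+(a+1)*x) \<ge> (a*x)*x"
    using a0 assms by (intro mult_mono) (auto simp: algebra_simps)
  moreover have "(a*x)*x \<ge> x*x/N"
    using assms a0 by (simp add: field_simps)
  ultimately have le: "(1+a*x)*(1+(a+1)*x) \<ge> x*x/N" by linarith
  have pos: "(1+a*x)*(1+(a+1)*x) > 0" using a0 assms by (simp add: add_pos_nonneg)
  have "x/((1+a*x)*(1+(a+1)*x)) \<le> x/(x*x/N)"
    using le assms pos by (intro divide_left_mono) auto
  also have "\<dots> = N/x" using assms by (simp add: field_simps)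
  finally show ?thesis .
qed

theorem corollary3:
  fixes Ns :: nat and \<beta> :: real
  assumes "Ns \<ge> 1" and "\<beta> > 0"
  shows "((\<lambda>\<gamma>. \<gamma> * ln 2 * deriv (thcdma_MI Ns \<beta>) \<gamma>)
            \<longlongrightarrow> \<beta> * exp (- (real Ns ^ 2 * \<beta>))) at_top"
proof -
  define N where "N = real Ns ^ 2"
  define c where "c = real Ns ^ 2 * \<beta>"
  have N0: "N > 0" using assms by (simp add: N_def)
  have c0: "c \<ge> 0" using assms by (simp add: c_def)
  define p where "p k = c^k / fact k * exp (- c)" for k :: nat
  define f where "f k \<gamma> = p k * log 2 (1 + \<gamma> / (1 + (real k / N) * \<gamma>))" for k :: nat and \<gamma> :: real
  define D where "D k \<gamma> = 1/((1+(real k / N)*\<gamma>)*(1+(real k / N+1)*\<gamma>)*ln 2)" for k :: nat and \<gamma> :: real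
  define f' where "f' k \<gamma> = p k * D k \<gamma>" for k :: nat and \<gamma> :: real
  have MI: "thcdma_MI Ns \<beta> = (\<lambda>\<gamma>. \<beta> * (\<Sum>k. f k \<gamma>))"
    by (auto simp: fun_eq_iff thcdma_MI_def f_def p_def c_def N_def)
  have p0: "p k \<ge> 0" for k using c0 by (simp add: p_def)
  have sp: "summable p"
  proof -
    have "summable (\<lambda>k. inverse (fact k) * c^k)" by (rule summable_exp)
    hence "summable (\<lambda>k. c^k / fact k)" by (simp add: divide_inverse mult.commute)
    thus ?thesis unfolding p_def by (rule summable_mult2)
  qed
  have ak: "real k / N \<ge> 0" for k using N0 by simp
  have derf: "(f k has_field_derivative f' k x) (at x within {0<..})" if "x \<in> {0<..}" for k x
  proof -
    have "x > 0" using that by simp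
    from DERIV_cmult[OF deriv_F[OF ak this], of "p k"]
    show ?thesis unfolding f_def[abs_def] f'_def D_def by (rule has_field_derivative_at_within)
  qed
  have Dle: "norm (f' n x) \<le> p n / ln 2" if "x \<in> {0<..}" for n x
  proof -
    have "x > 0" using that by simp
    note b = D_bound[OF ak this, of n]
    have "norm (f' n x) = p n * D n x" using b p0[of n] by (simp add: f'_def D_def)
    also have "\<dots> \<le> p n * (1 / ln 2)" using b p0[of n] by (intro mult_left_mono) (auto simp: D_def)
    finally show ?thesis by simp
  qed
  have uc: "uniformly_convergent_on {0<..} (\<lambda>n x. \<Sum>i<n. f' i x)"
    by (rule Weierstrass_m_test'[OF Dle]) (auto intro: summable_divide sp)
  have sf1: "summable (\<lambda>n. f n 1)"
  proof (rule summable_comparison_test'[OF sp])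
    fix n :: nat
    have a: "real n / N \<ge> 0" by (rule ak)
    have "1 / (1 + real n / N) \<le> 1" using a by simp
    hence l1: "1 + 1 / (1 + real n / N) \<le> 2" by linarith
    have l0: "1 \<le> 1 + 1 / (1 + real n / N)" using a by simp
    have "log 2 (1 + 1 / (1 + real n / N)) \<le> log 2 2"
      using l1 l0 by (intro log_le_cancel_iff[THEN iffD2]) (auto simp: a add_pos_nonneg)
    hence u: "log 2 (1 + 1 / (1 + real n / N)) \<le> 1" by simp
    have v: "log 2 (1 + 1 / (1 + real n / N)) \<ge> 0" using l0 by (intro zero_le_log_cancel_iff[THEN iffD2]) (auto simp: a add_pos_nonneg)
    show "norm (f n 1) \<le> p n" using u v p0[of n]
      by (simp add: f_def abs_mult) (metis mult_left_le mult.commute)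
  qed
  have der: "deriv (thcdma_MI Ns \<beta>) x = \<beta> * (\<Sum>n. f' n x)" if "x > 0" for x
  proof -
    have "x \<in> interior {(0::real)<..}" using that by (simp add: interior_open)
    from has_field_derivative_series'(2)[OF convex_real_interval(3) derf uc _ sf1 this]
    have "((\<lambda>x. \<Sum>n. f n x) has_field_derivative (\<Sum>n. f' n x)) (at x)" by simp
    from DERIV_cmult[OF this, of \<beta>] show ?thesis unfolding MI by (rule DERIV_imp_deriv)
  qed
  have sf': "summable (\<lambda>n. f' n x)" if "x > 0" for x
    by (rule summable_comparison_test'[of "\<lambda>n. p n / ln 2"]) (use Dle that sp in \<open>auto intro: summable_divide\<close>)
  define q where "q n \<gamma> = p n * (\<gamma>/((1+(real n / N)*\<gamma>)*(1+(real n / N+1)*\<gamma>)))" for n :: nat and \<gamma> :: real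
  have sq: "summable (\<lambda>n. q n x)" and eqq: "x * ln 2 * deriv (thcdma_MI Ns \<beta>) x = \<beta> * (\<Sum>n. q n x)"
    if "x > 0" for x
  proof -
    have qe: "q n x = f' n x * (x * ln 2)" for n
      by (simp add: q_def f'_def D_def)
    show "summable (\<lambda>n. q n x)" unfolding qe by (rule summable_mult2[OF sf'[OF that]])
    show "x * ln 2 * deriv (thcdma_MI Ns \<beta>) x = \<beta> * (\<Sum>n. q n x)"
      unfolding qe der[OF that] suminf_mult2[OF sf'[OF that], symmetric] by simp
  qed
  define T where "T x = (\<Sum>n. q (Suc n) x)" for x
  have split: "x * ln 2 * deriv (thcdma_MI Ns \<beta>) x = \<beta> * (exp (-c) * (x / (1 + x)) + T x)" if "x > 0" for x
    unfolding eqq[OF that] T_def suminf_split_head[OF sq[OF that]]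
    by (simp add: q_def p_def)
  define P where "P = (\<Sum>n. p (Suc n))"
  have sps: "summable (\<lambda>n. p (Suc n))" using sp by (simp add: summable_Suc_iff)
  have Tlo: "0 \<le> T x" if "x > 0" for x
    unfolding T_def
  proof (rule suminf_nonneg)
    show "summable (\<lambda>n. q (Suc n) x)" using sq[OF that] summable_Suc_iff[where f="\<lambda>n. q n x"] by simp
    fix n
    have "0 \<le> x/((1+(real (Suc n) / N)*x)*(1+(real (Suc n) / N+1)*x))"
      using that N0 by (simp add: add_pos_nonneg)
    thus "0 \<le> q (Suc n) x" unfolding q_def by (intro mult_nonneg_nonneg p0)
  qed
  have Thi: "T x \<le> P * (N / x)" if "x > 0" for x
  proof -
    have "T x \<le> (\<Sum>n. p (Suc n) * (N / x))"
      unfolding T_def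
    proof (rule suminf_le)
      show "summable (\<lambda>n. q (Suc n) x)" using sq[OF that] summable_Suc_iff[where f="\<lambda>n. q n x"] by simp
      show "summable (\<lambda>n. p (Suc n) * (N / x))" by (rule summable_mult2[OF sps])
      fix n
      have "1 / N \<le> real (Suc n) / N" using N0 by (simp add: divide_right_mono)
      from tail_bound[OF N0 this that]
      show "q (Suc n) x \<le> p (Suc n) * (N / x)" unfolding q_def
        by (rule mult_left_mono) (rule p0)
    qed
    also have "\<dots> = P * (N / x)" unfolding P_def by (rule suminf_mult2[OF sps, symmetric])
    finally show ?thesis .
  qed
  have T0: "(T \<longlongrightarrow> 0) at_top"
  proof (rule tendsto_sandwich[of "\<lambda>_. 0" _ _ "\<lambda>x. P * (N / x)"])
    show "\<forall>\<^sub>F x in at_top. 0 \<le> T x" by (rule eventually_mono[OF eventually_gt_at_top[of 0]]) (rule Tlo)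
    show "\<forall>\<^sub>F x in at_top. T x \<le> P * (N / x)" by (rule eventually_mono[OF eventually_gt_at_top[of 0]]) (rule Thi)
    show "((\<lambda>_. 0::real) \<longlongrightarrow> 0) at_top" by simp
    show "((\<lambda>x. P * (N / x)) \<longlongrightarrow> 0) at_top" by real_asymp
  qed
  have lim1: "((\<lambda>x::real. x / (1 + x)) \<longlongrightarrow> 1) at_top" by real_asymp
  have "((\<lambda>x. \<beta> * (exp (-c) * (x / (1 + x)) + T x)) \<longlongrightarrow> \<beta> * (exp (-c) * 1 + 0)) at_top"
    by (intro tendsto_intros lim1 T0)
  hence L: "((\<lambda>x. \<beta> * (exp (-c) * (x / (1 + x)) + T x)) \<longlongrightarrow> \<beta> * exp (- (real Ns ^ 2 * \<beta>))) at_top"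
    by (simp add: c_def)
  show ?thesis
    by (rule Lim_transform_eventually[OF L])
       (rule eventually_mono[OF eventually_gt_at_top[of 0]], rule split[symmetric])
qed

end
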